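(* Fix $j\ge0$. Let $f_j(z)$, $g_j(z)$, $h_j(z)$ be the generating functions, in which $z^n$ marks paths of length $n$, of the following partial Dyck paths ending at height $j$: <ul> <li>$f_j$: all descents have odd length, and the path either ends with an up-step or is the empty path (the empty path only when $j=0$);</li> <li>$g_j$: the path ends with a down-step, its last descent has odd length, and all earlier descents have odd length;</li> <li>$h_j$: the path ends with a down-step, its last descent has even length, and all earlier descents have odd length.</li> </ul> Then $f_0=1$, $f_j=v_1^{-j}$ for $j\ge1$, and for all $j\ge0$ $$g_j=\frac{z(1+h_0)}{v_1^{\,j+1}},\qquad h_j=\frac{z\,g_0}{v_1^{\,j+1}},$$ where $$g_0=\frac{z v_1}{v_1^2-z^2},\qquad h_0=\frac{z^2}{v_1^2-z^2}.$$ Equivalently, in terms of the bivariate series, one has $\sum_{j\ge0}f_ju^j=1-\frac{u}{u-v_1}$, $\sum_{j\ge0}g_ju^j=\frac{-z(1+h_0)}{u-v_1}$ and $\sum_{j\ge0}h_ju^j=\frac{-zg_0}{u-v_1}$.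
   Context: A partial Dyck path (prefix of a Dyck path) is a finite sequence of up-steps $(1,1)$ and down-steps $(1,-1)$ starting at height $0$ and never going below height $0$; its length is its number of steps. A descent is a maximal run of consecutive down-steps; its length is the number of down-steps in it. Let $v_1=v_1(z)$ denote the unique root $u$ of the cubic $$z u^3+(z^2-1)u^2-z^3u+z^2=0$$ which is a Laurent series in $z$ with $z\,v_1(z)\to1$ as $z\to0$. Its expansion begins $v_1=\frac1z-z-z^5-2z^7-\cdots$. *)

theory Defs
  imports "HOL-Computational_Algebra.Formal_Laurent_Series"
begin

definition step_val :: "bool \<Rightarrow> int" where
  "step_val b = (if b then 1 else -1)"

definition height :: "bool list \<Rightarrow> int" where
  "height xs = (\<Sum>b\<leftarrow>xs. step_val b)"

definition partial_dyck :: "bool list \<Rightarrow> bool" where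
  "partial_dyck xs \<longleftrightarrow> (\<forall>k\<le>length xs. height (take k xs) \<ge> 0)"

(* lengths of the maximal runs of down-steps, in order of occurrence;
   c is the length of the run currently being read *)
fun desc_aux :: "nat \<Rightarrow> bool list \<Rightarrow> nat list" where
  "desc_aux c [] = (if c > 0 then [c] else [])"
| "desc_aux c (True # xs) = (if c > 0 then c # desc_aux 0 xs else desc_aux 0 xs)"
| "desc_aux c (False # xs) = desc_aux (Suc c) xs"

definition descents :: "bool list \<Rightarrow> nat list" where
  "descents xs = desc_aux 0 xs"

definition F_paths :: "nat \<Rightarrow> bool list set" where
  "F_paths j = {xs. partial_dyck xs \<and> height xs = int j
      \<and> (\<forall>d\<in>set (descents xs). odd d) \<and> (xs = [] \<or> last xs = True)}"

definition G_paths :: "nat \<Rightarrow> bool list set" where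
  "G_paths j = {xs. partial_dyck xs \<and> height xs = int j \<and> xs \<noteq> [] \<and> last xs = False
      \<and> odd (last (descents xs)) \<and> (\<forall>d\<in>set (butlast (descents xs)). odd d)}"

definition H_paths :: "nat \<Rightarrow> bool list set" where
  "H_paths j = {xs. partial_dyck xs \<and> height xs = int j \<and> xs \<noteq> [] \<and> last xs = False
      \<and> even (last (descents xs)) \<and> (\<forall>d\<in>set (butlast (descents xs)). odd d)}"

definition gf :: "bool list set \<Rightarrow> real fls" where
  "gf S = fps_to_fls (Abs_fps (\<lambda>n. of_nat (card {xs\<in>S. length xs = n})))"

(* v_1: the root of z u^3 + (z^2-1) u^2 - z^3 u + z^2 = 0 that is a Laurent series
   with z v_1 -> 1 as z -> 0, i.e. subdegree -1 and leading coefficient 1 *)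
definition v1 :: "real fls" where
  "v1 = (THE u. fls_X * u^3 + (fls_X^2 - 1) * u^2 - fls_X^3 * u + fls_X^2 = 0
            \<and> u \<noteq> 0 \<and> fls_subdegree u = -1 \<and> fls_nth u (-1) = 1)"

end

theory Submission
  imports Defs
begin


lemma height_Nil[simp]: "height [] = 0" by (simp add: height_def)
lemma height_Cons[simp]: "height (b # xs) = step_val b + height xs" by (simp add: height_def)
lemma height_append[simp]: "height (xs @ ys) = height xs + height ys" by (simp add: height_def)
lemma step_val_simps[simp]: "step_val True = 1" "step_val False = -1" by (simp_all add: step_val_def)

lemma desc_aux_cat: "desc_aux c (A @ True # B) = desc_aux c A @ desc_aux 0 B"
  by (induction c A rule: desc_aux.induct) auto

lemma descents_cat: "descents (A @ True # B) = descents A @ descents B"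
  by (simp add: descents_def desc_aux_cat)

lemma desc_aux_snoc:
  "desc_aux c (xs @ [False]) = (if (xs \<noteq> [] \<and> last xs = False) \<or> (xs = [] \<and> c > 0)
     then butlast (desc_aux c xs) @ [last (desc_aux c xs) + 1] else desc_aux c xs @ [1])
   \<and> (((xs \<noteq> [] \<and> last xs = False) \<or> (xs = [] \<and> c > 0)) \<longrightarrow> desc_aux c xs \<noteq> [])"
  by (induction c xs rule: desc_aux.induct) auto

lemma descents_snoc:
  "descents (xs @ [False]) = (if xs \<noteq> [] \<and> last xs = False
     then butlast (descents xs) @ [last (descents xs) + 1] else descents xs @ [1])"
  using desc_aux_snoc[of 0 xs] by (simp add: descents_def)

lemma descents_ne: "xs \<noteq> [] \<Longrightarrow> last xs = False \<Longrightarrow> descents xs \<noteq> []"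
  using desc_aux_snoc[of 0 xs] by (simp add: descents_def)



lemma pd_Nil[simp]: "partial_dyck []" by (simp add: partial_dyck_def)

lemma pd_take: "partial_dyck xs \<Longrightarrow> partial_dyck (take m xs)"
  unfolding partial_dyck_def by (simp add: min_def)

lemma pd_snoc: "partial_dyck (xs @ [b]) \<longleftrightarrow> partial_dyck xs \<and> height (xs @ [b]) \<ge> 0"
proof
  assume a: "partial_dyck (xs @ [b])"
  have "partial_dyck (take (length xs) (xs @ [b]))" using pd_take[OF a] .
  then show "partial_dyck xs \<and> height (xs @ [b]) \<ge> 0" using a unfolding partial_dyck_def
    by (metis append_eq_conv_conj le_refl take_all)
next
  assume a: "partial_dyck xs \<and> height (xs @ [b]) \<ge> 0"
  show "partial_dyck (xs @ [b])" unfolding partial_dyck_def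
  proof (intro allI impI)
    fix k assume "k \<le> length (xs @ [b])"
    then consider "k \<le> length xs" | "k = Suc (length xs)" by fastforce
    then show "0 \<le> height (take k (xs @ [b]))"
      using a unfolding partial_dyck_def by cases auto
  qed
qed

lemma pd_cat: assumes "partial_dyck A" "height A = 0" "partial_dyck B"
  shows "partial_dyck (A @ True # B)"
  unfolding partial_dyck_def
proof (intro allI impI)
  fix k assume k: "k \<le> length (A @ True # B)"
  show "0 \<le> height (take k (A @ True # B))"
  proof (cases "k \<le> length A")
    case True then show ?thesis using assms(1) unfolding partial_dyck_def by simp
  next
    case False
    then obtain m where m: "k = length A + Suc m" by (metis add_Suc_right le_add1 less_imp_Suc_add not_le)
    then have "take k (A @ True # B) = A @ True # take m B" by simp
    moreover have "height (take m B) \<ge> 0" using assms(3) k m unfolding partial_dyck_def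
      by (cases "m \<le> length B") auto
    ultimately show ?thesis using assms(2) by simp
  qed
qed

lemma cat_unique:
  assumes eq: "A @ True # B = A' @ True # B'" and h: "height A = 0" "height A' = 0"
    and p: "partial_dyck B" "partial_dyck B'"
  shows "A = A' \<and> B = B'"
proof -
  have gen: "\<not> length X < length X'" if e: "X @ True # Y = X' @ True # Y'"
    and hX': "height X' = 0" and hX: "height X = 0" and pY: "partial_dyck Y" for X Y X' Y'
  proof
    assume lt: "length X < length X'"
    then obtain m where m: "length X' = length X + Suc m" using less_imp_Suc_add by auto
    have "X' = take (length X') (X' @ True # Y')" by simp
    also have "\<dots> = take (length X') (X @ True # Y)" using e by simp
    also have "\<dots> = X @ True # take m Y" using m by simp
    finally have "height X' = 1 + height (take m Y)" using hX by simp
    moreover have "height (take m Y) \<ge> 0" using pY unfolding partial_dyck_def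
      by (cases "m \<le> length Y") auto
    ultimately show False using hX' by simp
  qed
  have "length A = length A'" using gen[OF eq h(2) h(1) p(1)] gen[OF eq[symmetric] h(1) h(2) p(2)] by simp
  then show ?thesis using eq by simp
qed

lemma decomp:
  assumes p: "partial_dyck s" and hs: "height s \<ge> 1"
  shows "\<exists>A B. s = A @ True # B \<and> partial_dyck A \<and> height A = 0 \<and> partial_dyck B"
proof -
  define K where "K = {k. k \<le> length s \<and> height (take k s) = 0}"
  have fin: "finite K" unfolding K_def by simp
  have "0 \<in> K" unfolding K_def by simp
  define k where "k = Max K"
  have kK: "k \<in> K" unfolding k_def using fin \<open>0 \<in> K\<close> Max_in by blast
  have maxk: "\<And>i. i \<in> K \<Longrightarrow> i \<le> k" unfolding k_def using fin by simp
  have "k \<noteq> length s" using kK hs unfolding K_def by auto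
  then have kl: "k < length s" using kK unfolding K_def by simp
  have hk: "height (take k s) = 0" using kK unfolding K_def by simp
  have above: "height (take i s) \<ge> 1" if "k < i" "i \<le> length s" for i
  proof -
    have "i \<notin> K" using maxk that by fastforce
    then have "height (take i s) \<noteq> 0" using that unfolding K_def by simp
    moreover have "height (take i s) \<ge> 0" using p that unfolding partial_dyck_def by simp
    ultimately show ?thesis by simp
  qed
  have ts: "take (Suc k) s = take k s @ [s ! k]" using kl by (simp add: take_Suc_conv_app_nth)
  have "height (take (Suc k) s) \<ge> 1" using above kl by simp
  then have sk: "s ! k = True" using hk ts by (cases "s ! k") auto
  define A where "A = take k s"
  define B where "B = drop (Suc k) s"
  have s: "s = A @ True # B" unfolding A_def B_def using kl sk
    by (metis Cons_nth_drop_Suc append_take_drop_id)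
  have pA: "partial_dyck A" unfolding A_def using pd_take[OF p] .
  have pB: "partial_dyck B" unfolding partial_dyck_def
  proof (intro allI impI)
    fix m assume m: "m \<le> length B"
    have "take (Suc k + m) s = take (Suc k) s @ take m (drop (Suc k) s)" by (rule take_add)
    also have "\<dots> = (A @ [True]) @ take m B" unfolding A_def B_def ts sk by (rule refl)
    finally have e: "take (Suc k + m) s = A @ True # take m B" by simp
    have "Suc k + m \<le> length s" using m kl unfolding B_def by simp
    then have "height (take (Suc k + m) s) \<ge> 1" using above by simp
    then show "0 \<le> height (take m B)" unfolding e using hk unfolding A_def by simp
  qed
  have hA: "height A = 0" using hk unfolding A_def .
  show ?thesis using s pA pB hA by blast
qed



definition Exc :: "bool list set" where
  "Exc = {xs. partial_dyck xs \<and> height xs = 0 \<and> (\<forall>d\<in>set (descents xs). odd d)}"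
definition cat :: "bool list set \<Rightarrow> bool list set \<Rightarrow> bool list set" where
  "cat X Y = (\<lambda>(a,b). a @ True # b) ` (X \<times> Y)"
definition snocF :: "bool list set \<Rightarrow> bool list set" where
  "snocF S = (\<lambda>xs. xs @ [False]) ` S"

lemma last_True_height: assumes "partial_dyck s" "s \<noteq> []" "last s = True" shows "height s \<ge> 1"
proof -
  have s: "s = butlast s @ [True]" using assms by (metis append_butlast_last_id)
  have "partial_dyck (butlast s)" using assms(1) s pd_snoc by metis
  then have "height (butlast s) \<ge> 0" unfolding partial_dyck_def by (metis order_refl take_all)
  then show ?thesis by (subst s) simp
qed

lemma F0: "F_paths 0 = {[]}"
proof -
  have "xs = []" if "xs \<in> F_paths 0" for xs
    using that last_True_height[of xs] unfolding F_paths_def by auto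
  moreover have "[] \<in> F_paths 0" unfolding F_paths_def descents_def by simp
  ultimately show ?thesis by blast
qed

lemma last_cat: "last (A @ True # B) = (if B = [] then True else last B)" by simp

lemma F_suc: "F_paths (Suc j) = cat Exc (F_paths j)"
proof
  show "F_paths (Suc j) \<subseteq> cat Exc (F_paths j)"
  proof
    fix s assume s: "s \<in> F_paths (Suc j)"
    then obtain A B where AB: "s = A @ True # B" "partial_dyck A" "height A = 0" "partial_dyck B"
      using decomp[of s] unfolding F_paths_def by auto
    have "A \<in> Exc" "B \<in> F_paths j" using s AB unfolding F_paths_def Exc_def
      by (auto simp: descents_cat split: if_splits)
    then show "s \<in> cat Exc (F_paths j)" unfolding cat_def using AB(1) by force
  qed
next
  show "cat Exc (F_paths j) \<subseteq> F_paths (Suc j)"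
  proof
    fix s assume "s \<in> cat Exc (F_paths j)"
    then obtain A B where AB: "s = A @ True # B" "A \<in> Exc" "B \<in> F_paths j" unfolding cat_def by auto
    then show "s \<in> F_paths (Suc j)" unfolding F_paths_def Exc_def
      by (auto simp: descents_cat pd_cat)
  qed
qed

lemma dl: "dB \<noteq> [] \<Longrightarrow> last (dA @ dB) = last dB \<and> butlast (dA @ dB) = dA @ butlast dB"
  by (simp add: butlast_append)

lemma G_suc: "G_paths (Suc j) = cat Exc (G_paths j)"
proof
  show "G_paths (Suc j) \<subseteq> cat Exc (G_paths j)"
  proof
    fix s assume s: "s \<in> G_paths (Suc j)"
    then obtain A B where AB: "s = A @ True # B" "partial_dyck A" "height A = 0" "partial_dyck B"
      using decomp[of s] unfolding G_paths_def by auto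
    have Bne: "B \<noteq> []" "last B = False" using s AB(1) unfolding G_paths_def by (auto split: if_splits)
    then have "descents B \<noteq> []" by (rule descents_ne)
    then have "A \<in> Exc" "B \<in> G_paths j" using s AB Bne unfolding G_paths_def Exc_def
      by (auto simp: descents_cat dl)
    then show "s \<in> cat Exc (G_paths j)" unfolding cat_def using AB(1) by force
  qed
next
  show "cat Exc (G_paths j) \<subseteq> G_paths (Suc j)"
  proof
    fix s assume "s \<in> cat Exc (G_paths j)"
    then obtain A B where AB: "s = A @ True # B" "A \<in> Exc" "B \<in> G_paths j" unfolding cat_def by auto
    then have "descents B \<noteq> []" using descents_ne unfolding G_paths_def by auto
    then show "s \<in> G_paths (Suc j)" using AB unfolding G_paths_def Exc_def
      by (auto simp: descents_cat pd_cat dl)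
  qed
qed

lemma H_suc: "H_paths (Suc j) = cat Exc (H_paths j)"
proof
  show "H_paths (Suc j) \<subseteq> cat Exc (H_paths j)"
  proof
    fix s assume s: "s \<in> H_paths (Suc j)"
    then obtain A B where AB: "s = A @ True # B" "partial_dyck A" "height A = 0" "partial_dyck B"
      using decomp[of s] unfolding H_paths_def by auto
    have Bne: "B \<noteq> []" "last B = False" using s AB(1) unfolding H_paths_def by (auto split: if_splits)
    then have "descents B \<noteq> []" by (rule descents_ne)
    then have "A \<in> Exc" "B \<in> H_paths j" using s AB Bne unfolding H_paths_def Exc_def
      by (auto simp: descents_cat dl)
    then show "s \<in> cat Exc (H_paths j)" unfolding cat_def using AB(1) by force
  qed
next
  show "cat Exc (H_paths j) \<subseteq> H_paths (Suc j)"
  proof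
    fix s assume "s \<in> cat Exc (H_paths j)"
    then obtain A B where AB: "s = A @ True # B" "A \<in> Exc" "B \<in> H_paths j" unfolding cat_def by auto
    then have "descents B \<noteq> []" using descents_ne unfolding H_paths_def by auto
    then show "s \<in> H_paths (Suc j)" using AB unfolding H_paths_def Exc_def
      by (auto simp: descents_cat pd_cat dl)
  qed
qed



lemma snoc_form: "s \<noteq> [] \<Longrightarrow> last s = False \<Longrightarrow> s = butlast s @ [False]"
  by (metis append_butlast_last_id)

lemma G_snoc: "G_paths j = snocF (F_paths (Suc j) \<union> H_paths (Suc j))"
proof
  show "G_paths j \<subseteq> snocF (F_paths (Suc j) \<union> H_paths (Suc j))"
  proof
    fix s assume s: "s \<in> G_paths j"
    define xs where "xs = butlast s"
    have sx: "s = xs @ [False]" using s snoc_form unfolding G_paths_def xs_def by auto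
    have p: "partial_dyck xs" "height xs = int j + 1" using s pd_snoc[of xs False] unfolding sx G_paths_def by auto
    then have ne: "xs \<noteq> []" by auto
    have "xs \<in> F_paths (Suc j) \<union> H_paths (Suc j)"
    proof (cases "last xs")
      case True
      then show ?thesis using s p ne unfolding sx G_paths_def F_paths_def by (auto simp: descents_snoc)
    next
      case False
      then show ?thesis using s p ne unfolding sx G_paths_def H_paths_def by (auto simp: descents_snoc)
    qed
    then show "s \<in> snocF (F_paths (Suc j) \<union> H_paths (Suc j))" unfolding snocF_def sx by blast
  qed
next
  show "snocF (F_paths (Suc j) \<union> H_paths (Suc j)) \<subseteq> G_paths j"
  proof
    fix s assume "s \<in> snocF (F_paths (Suc j) \<union> H_paths (Suc j))"
    then obtain xs where sx: "s = xs @ [False]" and xs: "xs \<in> F_paths (Suc j) \<union> H_paths (Suc j)"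
      unfolding snocF_def by auto
    then have ne: "xs \<noteq> []" unfolding F_paths_def H_paths_def by auto
    from xs show "s \<in> G_paths j"
    proof
      assume a: "xs \<in> F_paths (Suc j)"
      then show ?thesis using ne pd_snoc[of xs False] unfolding sx G_paths_def F_paths_def
        by (auto simp: descents_snoc)
    next
      assume a: "xs \<in> H_paths (Suc j)"
      then show ?thesis using ne pd_snoc[of xs False] unfolding sx G_paths_def H_paths_def
        by (auto simp: descents_snoc)
    qed
  qed
qed

lemma H_snoc: "H_paths j = snocF (G_paths (Suc j))"
proof
  show "H_paths j \<subseteq> snocF (G_paths (Suc j))"
  proof
    fix s assume s: "s \<in> H_paths j"
    define xs where "xs = butlast s"
    have sx: "s = xs @ [False]" using s snoc_form unfolding H_paths_def xs_def by auto
    have p: "partial_dyck xs" "height xs = int j + 1" using s pd_snoc[of xs False] unfolding sx H_paths_def by auto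
    then have ne: "xs \<noteq> []" by auto
    have "xs \<in> G_paths (Suc j)"
    proof (cases "last xs")
      case True
      then show ?thesis using s p ne unfolding sx H_paths_def by (auto simp: descents_snoc)
    next
      case False
      then show ?thesis using s p ne unfolding sx G_paths_def H_paths_def by (auto simp: descents_snoc)
    qed
    then show "s \<in> snocF (G_paths (Suc j))" unfolding snocF_def sx by blast
  qed
next
  show "snocF (G_paths (Suc j)) \<subseteq> H_paths j"
  proof
    fix s assume "s \<in> snocF (G_paths (Suc j))"
    then obtain xs where sx: "s = xs @ [False]" and xs: "xs \<in> G_paths (Suc j)"
      unfolding snocF_def by auto
    then show "s \<in> H_paths j" using pd_snoc[of xs False] unfolding sx G_paths_def H_paths_def
        by (auto simp: descents_snoc)
  qed
qed

lemma Exc_split: "Exc = insert [] (G_paths 0)" "[] \<notin> G_paths 0"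
proof -
  show "[] \<notin> G_paths 0" unfolding G_paths_def by simp
  have "s \<in> G_paths 0" if s: "s \<in> Exc" "s \<noteq> []" for s
  proof -
    have "last s = False" using last_True_height[of s] s unfolding Exc_def by auto
    then have "descents s \<noteq> []" using s(2) descents_ne by blast
    then show ?thesis using s \<open>last s = False\<close> unfolding Exc_def G_paths_def
      by (auto dest: in_set_butlastD)
  qed
  moreover have "s \<in> Exc" if s: "s \<in> G_paths 0" for s
  proof -
    have "descents s \<noteq> []" using s descents_ne unfolding G_paths_def by blast
    then have "set (descents s) = set (butlast (descents s)) \<union> {last (descents s)}"
      by (metis append_butlast_last_id set_append empty_set insert_is_Un list.simps(15) sup_commute)
    then show ?thesis using s unfolding Exc_def G_paths_def by auto
  qed
  moreover have "[] \<in> Exc" unfolding Exc_def descents_def by simp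
  ultimately show "Exc = insert [] (G_paths 0)" by blast
qed



definition cnt :: "bool list set \<Rightarrow> nat \<Rightarrow> nat" where
  "cnt S n = card {xs\<in>S. length xs = n}"
definition gfun :: "bool list set \<Rightarrow> real fps" where
  "gfun S = Abs_fps (\<lambda>n. of_nat (cnt S n))"

lemma gf_gfun: "gf S = fps_to_fls (gfun S)"
  unfolding gf_def gfun_def cnt_def ..

lemma fin_len: "finite {xs\<in>(S::bool list set). length xs = n}"
proof -
  have "finite {xs::bool list. set xs \<subseteq> UNIV \<and> length xs = n}"
    by (rule finite_lists_length_eq) simp
  then show ?thesis by (rule finite_subset[rotated]) auto
qed

lemma cnt_cat:
  assumes X: "\<And>a. a \<in> X \<Longrightarrow> height a = 0" and Y: "\<And>b. b \<in> Y \<Longrightarrow> partial_dyck b"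
  shows "cnt (cat X Y) (Suc m) = (\<Sum>i\<le>m. cnt X i * cnt Y (m - i))" "cnt (cat X Y) 0 = 0"
proof -
  let ?f = "\<lambda>(a,b). a @ True # b"
  let ?P = "\<lambda>i. {a\<in>X. length a = i} \<times> {b\<in>Y. length b = m - i}"
  have inj: "inj_on ?f (X \<times> Y)"
  proof (rule inj_onI)
    fix p q assume p: "p \<in> X \<times> Y" and q: "q \<in> X \<times> Y" and e: "?f p = ?f q"
    obtain a b where ab: "p = (a, b)" by fastforce
    obtain a' b' where ab': "q = (a', b')" by fastforce
    have "a = a' \<and> b = b'"
      by (rule cat_unique) (use e ab ab' p q X Y in auto)
    then show "p = q" using ab ab' by simp
  qed
  have eq: "{s\<in>cat X Y. length s = Suc m} = ?f ` (\<Union>i\<in>{..m}. ?P i)"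
  proof
    show "{s\<in>cat X Y. length s = Suc m} \<subseteq> ?f ` (\<Union>i\<in>{..m}. ?P i)"
    proof
      fix s assume "s \<in> {s\<in>cat X Y. length s = Suc m}"
      then obtain a b where s: "s = a @ True # b" "a \<in> X" "b \<in> Y" "length s = Suc m"
        unfolding cat_def by auto
      then have "(a, b) \<in> ?P (length a)" "length a \<in> {..m}" by auto
      then show "s \<in> ?f ` (\<Union>i\<in>{..m}. ?P i)" using s(1) by (auto intro!: image_eqI[of _ _ "(a,b)"])
    qed
    show "?f ` (\<Union>i\<in>{..m}. ?P i) \<subseteq> {s\<in>cat X Y. length s = Suc m}"
      unfolding cat_def by auto
  qed
  have sub: "(\<Union>i\<in>{..m}. ?P i) \<subseteq> X \<times> Y" by auto
  have "cnt (cat X Y) (Suc m) = card (\<Union>i\<in>{..m}. ?P i)"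
    unfolding cnt_def eq by (rule card_image[OF inj_on_subset[OF inj sub]])
  also have "\<dots> = (\<Sum>i\<le>m. card (?P i))"
    by (rule card_UN_disjoint) (auto simp: fin_len)
  also have "\<dots> = (\<Sum>i\<le>m. cnt X i * cnt Y (m - i))"
    unfolding cnt_def by (simp add: card_cartesian_product)
  finally show "cnt (cat X Y) (Suc m) = (\<Sum>i\<le>m. cnt X i * cnt Y (m - i))" .
  show "cnt (cat X Y) 0 = 0" unfolding cnt_def cat_def by auto
qed

lemma gfun_cat:
  assumes X: "\<And>a. a \<in> X \<Longrightarrow> height a = 0" and Y: "\<And>b. b \<in> Y \<Longrightarrow> partial_dyck b"
  shows "gfun (cat X Y) = fps_X * (gfun X * gfun Y)"
proof (rule fps_ext)
  fix n show "gfun (cat X Y) $ n = (fps_X * (gfun X * gfun Y)) $ n"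
  proof (cases n)
    case 0 then show ?thesis using cnt_cat(2)[of X Y, OF X Y] by (simp add: gfun_def)
  next
    case (Suc m)
    have "(fps_X * (gfun X * gfun Y)) $ n = (gfun X * gfun Y) $ m" using Suc by simp
    also have "\<dots> = (\<Sum>i\<le>m. of_nat (cnt X i) * of_nat (cnt Y (m - i)))"
      by (simp add: gfun_def fps_mult_nth atLeast0AtMost)
    also have "\<dots> = gfun (cat X Y) $ n" using cnt_cat(1)[of X Y m, OF X Y] Suc by (simp add: gfun_def)
    finally show ?thesis by simp
  qed
qed

lemma cnt_snoc: "cnt (snocF S) (Suc m) = cnt S m" "cnt (snocF S) 0 = 0"
proof -
  have "{xs \<in> snocF S. length xs = Suc m} = (\<lambda>xs. xs @ [False]) ` {xs\<in>S. length xs = m}"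
    unfolding snocF_def by auto
  moreover have "inj_on (\<lambda>xs. xs @ [False]) {xs\<in>S. length xs = m}" by (auto simp: inj_on_def)
  ultimately show "cnt (snocF S) (Suc m) = cnt S m" unfolding cnt_def by (simp add: card_image)
  show "cnt (snocF S) 0 = 0" unfolding cnt_def snocF_def by auto
qed

lemma gfun_snoc: "gfun (snocF S) = fps_X * gfun S"
proof (rule fps_ext)
  fix n show "gfun (snocF S) $ n = (fps_X * gfun S) $ n"
    by (cases n) (simp_all add: gfun_def cnt_snoc)
qed

lemma gfun_Un: "S \<inter> T = {} \<Longrightarrow> gfun (S \<union> T) = gfun S + gfun T"
proof (rule fps_ext)
  fix n assume d: "S \<inter> T = {}"
  have "{xs \<in> S \<union> T. length xs = n} = {xs \<in> S. length xs = n} \<union> {xs \<in> T. length xs = n}" by auto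
  then have "cnt (S \<union> T) n = cnt S n + cnt T n" unfolding cnt_def
    using d by (simp add: card_Un_disjoint fin_len disjoint_iff)
  then show "gfun (S \<union> T) $ n = (gfun S + gfun T) $ n" by (simp add: gfun_def)
qed

lemma gfun_single: "gfun {[]} = 1"
proof (rule fps_ext)
  fix n show "gfun {[]} $ n = 1 $ n"
    by (cases n) (simp_all add: gfun_def cnt_def)
qed



lemma gf_cat:
  assumes "\<And>a. a \<in> X \<Longrightarrow> height a = 0" "\<And>b. b \<in> Y \<Longrightarrow> partial_dyck b"
  shows "gf (cat X Y) = fls_X * (gf X * gf Y)"
proof -
  have "gfun (cat X Y) = fps_X * (gfun X * gfun Y)" by (rule gfun_cat) (use assms in auto)
  then show ?thesis by (simp add: gf_gfun fls_times_fps_to_fls)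
qed

lemma gf_snoc: "gf (snocF S) = fls_X * gf S"
  unfolding gf_gfun gfun_snoc by (simp add: fls_times_fps_to_fls)

lemma gf_Un: "S \<inter> T = {} \<Longrightarrow> gf (S \<union> T) = gf S + gf T"
  unfolding gf_gfun by (simp add: gfun_Un)

lemma Exc_h: "a \<in> Exc \<Longrightarrow> height a = 0" unfolding Exc_def by simp

lemma rec_F: "gf (F_paths (Suc j)) = fls_X * (gf Exc * gf (F_paths j))"
  unfolding F_suc by (rule gf_cat) (auto simp: Exc_h F_paths_def)
lemma rec_G: "gf (G_paths (Suc j)) = fls_X * (gf Exc * gf (G_paths j))"
  unfolding G_suc by (rule gf_cat) (auto simp: Exc_h G_paths_def)
lemma rec_H: "gf (H_paths (Suc j)) = fls_X * (gf Exc * gf (H_paths j))"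
  unfolding H_suc by (rule gf_cat) (auto simp: Exc_h H_paths_def)
lemma F_0: "gf (F_paths 0) = 1"
  unfolding F0 gf_gfun gfun_single by simp
lemma rec_G0: "gf (G_paths j) = fls_X * (gf (F_paths (Suc j)) + gf (H_paths (Suc j)))"
proof -
  have "F_paths (Suc j) \<inter> H_paths (Suc j) = {}" unfolding F_paths_def H_paths_def by auto
  then show ?thesis unfolding G_snoc gf_snoc by (simp add: gf_Un)
qed
lemma rec_H0: "gf (H_paths j) = fls_X * gf (G_paths (Suc j))"
  unfolding H_snoc gf_snoc ..
lemma Exc_G: "gf Exc = 1 + gf (G_paths 0)"
proof -
  have "Exc = {[]} \<union> G_paths 0" using Exc_split by auto
  moreover have "{[]} \<inter> G_paths 0 = {}" using Exc_split by auto
  ultimately have "gf Exc = gf {[]} + gf (G_paths 0)" using gf_Un by metis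
  then show ?thesis by (simp add: gf_gfun gfun_single)
qed

lemma gfun_Exc0: "gfun Exc $ 0 = 1"
proof -
  have "{xs \<in> Exc. length xs = 0} = {[]}" using Exc_split by auto
  then show ?thesis by (simp add: gfun_def cnt_def)
qed



definition Qf :: "real fps \<Rightarrow> real fps" where
  "Qf x = fps_X + (fps_X^2 - 1) * x - fps_X^3 * x^2 + fps_X^2 * x^3"
definition Q :: "real fls \<Rightarrow> real fls" where
  "Q x = fls_X + (fls_X^2 - 1) * x - fls_X^3 * x^2 + fls_X^2 * x^3"
definition cub :: "real fls \<Rightarrow> real fls" where
  "cub u = fls_X * u^3 + (fls_X^2 - 1) * u^2 - fls_X^3 * u + fls_X^2"

lemma Q_conv: "Q (fps_to_fls P) = fps_to_fls (Qf P)"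
  by (simp add: Q_def Qf_def fls_times_fps_to_fls fps_to_fls_power)

lemma Qf_unique: assumes "Qf P = 0" "Qf P' = 0" shows "P = P'"
proof -
  define B where "B = (fps_X^2 - 1) - fps_X^3 * (P + P') + fps_X^2 * (P^2 + P*P' + P'^2)"
  have "Qf P - Qf P' = (P - P') * B"
    unfolding Qf_def B_def by (simp add: algebra_simps power2_eq_square power3_eq_cube)
  then have "(P - P') * B = 0" using assms by simp
  moreover have "B $ 0 = -1"
    unfolding B_def by (simp add: fps_X_power_mult_nth)
  then have "B \<noteq> 0" by auto
  ultimately show ?thesis by simp
qed

lemma cub_Q: assumes "W \<noteq> 0" shows "cub (inverse W) = Q W / W^3"
  using assms unfolding cub_def Q_def apply (simp add: field_simps) by algebra

lemma Q_cub: assumes "u \<noteq> 0" shows "Q (inverse u) = cub u / u^3"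
  using assms unfolding cub_def Q_def apply (simp add: field_simps) by algebra

lemma v1_eq:
  assumes W0: "Wf $ 0 = 0" and W1: "Wf $ 1 = 1" and QW: "Qf Wf = 0"
  shows "v1 = inverse (fps_to_fls Wf)"
proof -
  define W where "W = fps_to_fls Wf"
  have Wf0: "Wf \<noteq> 0" using W1 by auto
  have "subdegree Wf = 1" using W0 W1 by (intro subdegreeI) (auto simp: less_Suc_eq)
  then have sW: "fls_subdegree W = 1" unfolding W_def by (simp add: fls_subdegree_fls_to_fps)
  have Wn: "W \<noteq> 0" using Wf0 unfolding W_def by simp
  have W1': "fls_nth W 1 = 1" unfolding W_def using W1 by simp
  have C: "cub (inverse W) = 0 \<and> inverse W \<noteq> 0 \<and> fls_subdegree (inverse W) = -1 \<and> fls_nth (inverse W) (-1) = 1"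
  proof (intro conjI)
    show "cub (inverse W) = 0" using cub_Q[OF Wn] QW Q_conv unfolding W_def by simp
    show "inverse W \<noteq> 0" using Wn by simp
    show "fls_subdegree (inverse W) = -1" using sW Wn by simp
    show "fls_nth (inverse W) (-1) = 1" using fls_inverse_base[OF Wn] sW W1' by simp
  qed
  have U: "u = inverse W" if u: "cub u = 0" "u \<noteq> 0" "fls_subdegree u = -1" "fls_nth u (-1) = 1" for u
  proof -
    define p where "p = inverse u"
    have sp: "fls_subdegree p = 1" unfolding p_def using u by simp
    have Qp: "Q p = 0" unfolding p_def using Q_cub[OF u(2)] u(1) by simp
    define P where "P = fls_regpart p"
    have pP: "p = fps_to_fls P" unfolding P_def using sp by simp
    have "Qf P = 0" using Qp Q_conv pP by simp
    then have "P = Wf" using QW Qf_unique by blast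
    then have "p = W" using pP W_def by simp
    then show ?thesis unfolding p_def by (metis inverse_inverse_eq)
  qed
  have "v1 = inverse W" unfolding v1_def
    apply (rule the_equality)
    using C unfolding cub_def apply blast
    using U unfolding cub_def by blast
  then show ?thesis unfolding W_def .
qed



lemma geo_fps:
  fixes a v c :: "real fls"
  assumes av: "a * v = 1"
  shows "Abs_fps (\<lambda>j. c * a^(j+1)) = fps_const (-c) / (fps_X - fps_const v)"
proof -
  define D where "D = fps_X - fps_const v"
  have v0: "v \<noteq> 0" using av by auto
  have D0: "D $ 0 \<noteq> 0" unfolding D_def using v0 by simp
  have AD: "Abs_fps (\<lambda>j. c * a^(j+1)) * D = fps_const (-c)"
  proof (rule fps_ext)
    fix n show "(Abs_fps (\<lambda>j. c * a^(j+1)) * D) $ n = fps_const (-c) $ n"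
    proof (cases n)
      case 0 then show ?thesis unfolding D_def using av by (simp add: algebra_simps)
    next
      case (Suc m)
      have "c * a ^ Suc m - v * (c * a ^ Suc (Suc m)) = c * a ^ Suc m * (1 - a * v)"
        by (simp add: algebra_simps)
      then show ?thesis unfolding D_def using Suc av by (simp add: algebra_simps)
    qed
  qed
  have "fps_const (-c) / D = fps_const (-c) * inverse D" using D0 by (rule fps_divide_unit)
  also have "\<dots> = Abs_fps (\<lambda>j. c * a^(j+1)) * (D * inverse D)" unfolding AD[symmetric] by (simp add: mult.assoc)
  also have "\<dots> = Abs_fps (\<lambda>j. c * a^(j+1))" using inverse_mult_eq_1'[OF D0] by simp
  finally show ?thesis unfolding D_def by simp
qed

lemma one_minus_div:
  fixes v :: "real fls" assumes "v \<noteq> 0"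
  shows "1 - fps_X / (fps_X - fps_const v) = fps_const (-v) / (fps_X - fps_const v)"
proof -
  define D where "D = fps_X - fps_const v"
  have D0: "D $ 0 \<noteq> 0" unfolding D_def using assms by simp
  have "1 - fps_X / D = D * inverse D - fps_X * inverse D"
    using fps_divide_unit[OF D0] inverse_mult_eq_1'[OF D0] by simp
  also have "\<dots> = (D - fps_X) * inverse D" by (simp add: algebra_simps)
  also have "\<dots> = fps_const (-v) / D" using fps_divide_unit[OF D0] unfolding D_def by simp
  finally show ?thesis unfolding D_def .
qed

theorem mainTheorem3:
  fixes j :: nat
  defines "z \<equiv> (fls_X :: real fls)"
  defines "f \<equiv> (\<lambda>i. gf (F_paths i))"
      and "g \<equiv> (\<lambda>i. gf (G_paths i))"
      and "h \<equiv> (\<lambda>i. gf (H_paths i))"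
  shows "f 0 = 1
    \<and> (j \<ge> 1 \<longrightarrow> f j = inverse (v1 ^ j))
    \<and> g j = z * (1 + h 0) / v1 ^ (j + 1)
    \<and> h j = z * g 0 / v1 ^ (j + 1)
    \<and> g 0 = z * v1 / (v1^2 - z^2)
    \<and> h 0 = z^2 / (v1^2 - z^2)
    \<and> Abs_fps f = 1 - fps_X / (fps_X - fps_const v1)
    \<and> Abs_fps g = fps_const (- z * (1 + h 0)) / (fps_X - fps_const v1)
    \<and> Abs_fps h = fps_const (- z * g 0) / (fps_X - fps_const v1)"
proof -
  define Wf where "Wf = fps_X * gfun Exc"
  define W where "W = fps_to_fls Wf"
  have W_eq: "W = z * gf Exc" unfolding W_def Wf_def z_def gf_gfun by (simp add: fls_times_fps_to_fls)
  have Wf0: "Wf $ 0 = 0" unfolding Wf_def by simp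
  have Wf1: "Wf $ 1 = 1" unfolding Wf_def using gfun_Exc0 by simp
  have Wn: "W \<noteq> 0" unfolding W_def using Wf1 by auto
  have fj: "f i = W ^ i" for i
    by (induction i) (simp_all add: f_def F_0 rec_F W_eq z_def algebra_simps)
  have gj: "g i = W ^ i * g 0" for i
    by (induction i) (simp_all add: g_def rec_G W_eq z_def algebra_simps)
  have hj: "h i = W ^ i * h 0" for i
    by (induction i) (simp_all add: h_def rec_H W_eq z_def algebra_simps)
  have e0: "gf Exc = 1 + g 0" unfolding g_def by (rule Exc_G)
  have g0: "g 0 = z * (W + W * h 0)"
    using rec_G0[of 0] fj[of 1] hj[of 1] unfolding f_def g_def h_def z_def by simp
  have h0: "h 0 = z * W * g 0"
    using rec_H0[of 0] gj[of 1] unfolding g_def h_def z_def by (simp add: algebra_simps)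
  have e1: "W - z - z * g 0 = 0" using W_eq e0 by (simp add: algebra_simps)
  have e2: "g 0 - z * W - z^2 * W^2 * g 0 = 0" using g0 h0 by (simp add: algebra_simps power2_eq_square)
  have "Q W = (z^2*W^2 - 1) * (W - z - z * g 0) - z * (g 0 - z * W - z^2 * W^2 * g 0)"
    unfolding Q_def z_def by algebra
  then have "Q W = 0" using e1 e2 by simp
  then have "Qf Wf = 0" unfolding W_def Q_conv by simp
  then have v1W: "v1 = inverse W" using v1_eq[OF Wf0 Wf1] unfolding W_def by simp
  define D where "D = 1 - z^2 * W^2"
  have D0: "D \<noteq> 0"
  proof -
    have "D = fps_to_fls (1 - fps_X^2 * Wf^2)" unfolding D_def z_def W_def
      by (simp add: fls_times_fps_to_fls fps_to_fls_power)
    moreover have c: "(1 - fps_X^2 * Wf^2) $ 0 = (1::real)" by (simp add: fps_X_power_mult_nth)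
    have "(1 - fps_X^2 * Wf^2 :: real fps) \<noteq> 0"
    proof
      assume "(1 - fps_X^2 * Wf^2 :: real fps) = 0"
      then have "(1 - fps_X^2 * Wf^2 :: real fps) $ 0 = 0" by simp
      with c show False by simp
    qed
    ultimately show ?thesis using fps_to_fls_eq_0_iff by metis
  qed
  have gD: "g 0 * D = z * W" using e2 unfolding D_def by (simp add: algebra_simps)
  have vD: "v1^2 - z^2 = v1^2 * D" unfolding D_def v1W using Wn by (simp add: field_simps)
  have vW: "v1 * W = 1" unfolding v1W using Wn by simp
  have v1n: "v1 \<noteq> 0" using vW by auto
  have vz0: "v1^2 - z^2 \<noteq> 0" unfolding vD using D0 v1n by simp
  have P1: "f 0 = 1" using fj[of 0] by simp
  have "inverse (v1 ^ j) = W ^ j" unfolding v1W by (metis inverse_inverse_eq power_inverse)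
  then have P2: "j \<ge> 1 \<longrightarrow> f j = inverse (v1 ^ j)" using fj[of j] by simp
  have "v1 ^ (j+1) * W ^ (j+1) = 1" using vW by (metis power_mult_distrib power_one)
  then have dv: "x / v1 ^ (j + 1) = x * W ^ (j+1)" for x
    by (metis divide_inverse inverse_unique)
  have P3: "g j = z * (1 + h 0) / v1 ^ (j + 1)"
    unfolding dv gj[of j] g0 by (simp add: algebra_simps)
  have P4: "h j = z * g 0 / v1 ^ (j + 1)"
    unfolding dv hj[of j] h0 by (simp add: algebra_simps)
  have P5: "g 0 = z * v1 / (v1^2 - z^2)"
  proof -
    have "g 0 * (v1^2 - z^2) = g 0 * D * v1^2" unfolding vD by (simp add: algebra_simps)
    also have "\<dots> = z * (v1 * W) * v1" unfolding gD by (simp add: algebra_simps power2_eq_square)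
    finally have "g 0 * (v1^2 - z^2) = z * v1" using vW by simp
    then show ?thesis using vz0 by (simp add: eq_divide_eq)
  qed
  have P6: "h 0 = z^2 / (v1^2 - z^2)"
  proof -
    have "h 0 * (v1^2 - z^2) = z * W * (g 0 * (v1^2 - z^2))" unfolding h0 by (simp add: algebra_simps)
    also have "\<dots> = z * W * (z * v1)" using P5 vz0 by simp
    also have "\<dots> = z^2 * (v1 * W)" by (simp add: algebra_simps power2_eq_square)
    finally have "h 0 * (v1^2 - z^2) = z^2" using vW by simp
    then show ?thesis using vz0 by (simp add: eq_divide_eq)
  qed
  have aW: "W * v1 = 1" using vW by (simp add: mult.commute)
  have P7: "Abs_fps f = 1 - fps_X / (fps_X - fps_const v1)"
  proof -
    have "Abs_fps f = Abs_fps (\<lambda>i. v1 * W^(i+1))"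
      by (rule fps_ext) (simp add: fj vW mult.assoc[symmetric])
    also have "\<dots> = fps_const (-v1) / (fps_X - fps_const v1)" by (rule geo_fps[OF aW])
    also have "\<dots> = 1 - fps_X / (fps_X - fps_const v1)"
      using one_minus_div[OF v1n] by simp
    finally show ?thesis .
  qed
  have P8: "Abs_fps g = fps_const (- z * (1 + h 0)) / (fps_X - fps_const v1)"
  proof -
    have "g i = (z * (1 + h 0)) * W^(i+1)" for i
      unfolding gj[of i] g0 by (simp add: algebra_simps)
    then have "Abs_fps g = Abs_fps (\<lambda>i. (z * (1 + h 0)) * W^(i+1))"
      by (intro arg_cong[where f=Abs_fps] ext)
    also have "\<dots> = fps_const (- (z * (1 + h 0))) / (fps_X - fps_const v1)" by (rule geo_fps[OF aW])
    finally show ?thesis by simp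
  qed
  have P9: "Abs_fps h = fps_const (- z * g 0) / (fps_X - fps_const v1)"
  proof -
    have "h i = (z * g 0) * W^(i+1)" for i
      unfolding hj[of i] h0 by (simp add: algebra_simps)
    then have "Abs_fps h = Abs_fps (\<lambda>i. (z * g 0) * W^(i+1))"
      by (intro arg_cong[where f=Abs_fps] ext)
    also have "\<dots> = fps_const (- (z * g 0)) / (fps_X - fps_const v1)" by (rule geo_fps[OF aW])
    finally show ?thesis by simp
  qed
  show ?thesis using P1 P2 P3 P4 P5 P6 P7 P8 P9 by blast
qed


end
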